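(* Let $G=(V,E)$ be a $(2,2)$-$C_i$-tight graph or a $(2,2)$-$C_s$-tight graph, with involution $v\mapsto v'$. Suppose $v\in V$ has degree 3 with $N(v)=\{x,y,z\}$ and $xy\notin E$. If no $2$-critical subset of $V\setminus\{v,v'\}$ contains both $x$ and $y$, then there is no $W\subseteq V\setminus\{v,v'\}$ with $x,x',y,y'\in W$ and $i_G(W)=2|W|-3$.
   Context: A $\mathbb{Z}_2$-symmetric graph is a finite simple graph $G=(V,E)$ with an automorphism $\theta$ satisfying $\theta^2=\mathrm{id}$; write $v'=\theta(v)$. A vertex is fixed if $v'=v$; an edge $uv$ is fixed if $\{u',v'\}=\{u,v\}$. $G$ is $(2,2)$-sparse if every subgraph $(V',E')$ with $V'\ne\emptyset$ has $|E'|\le 2|V'|-2$, and $(2,2)$-tight if also $|E|=2|V|-2$. $G$ is $(2,2)$-$C_i$-tight if it is $(2,2)$-tight and $\theta$ fixes no vertex and no edge; $(2,2)$-$C_s$-tight if it is $(2,2)$-tight and $\theta$ fixes no edge. For $X\subseteq V$, $i_G(X)$ is the number of edges of the induced subgraph $G[X]$; $X$ is $k$-critical if $i_G(X)=2|X|-k$. *)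

theory Defs
  imports Main
begin

definition simple_graph :: "'a set \<Rightarrow> 'a set set \<Rightarrow> bool" where
  "simple_graph V E \<longleftrightarrow> finite V \<and> (\<forall>e\<in>E. e \<subseteq> V \<and> card e = 2)"

definition Z2_symmetric :: "'a set \<Rightarrow> 'a set set \<Rightarrow> ('a \<Rightarrow> 'a) \<Rightarrow> bool" where
  "Z2_symmetric V E \<theta> \<longleftrightarrow> simple_graph V E \<and> bij_betw \<theta> V V \<and>
     (\<forall>v\<in>V. \<theta> (\<theta> v) = v) \<and>
     (\<forall>u\<in>V. \<forall>v\<in>V. {u, v} \<in> E \<longleftrightarrow> {\<theta> u, \<theta> v} \<in> E)"

definition sparse22 :: "'a set \<Rightarrow> 'a set set \<Rightarrow> bool" where
  "sparse22 V E \<longleftrightarrow> (\<forall>V' E'. V' \<subseteq> V \<and> E' \<subseteq> E \<and> (\<forall>e\<in>E'. e \<subseteq> V') \<and> V' \<noteq> {}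
       \<longrightarrow> int (card E') \<le> 2 * int (card V') - 2)"

definition tight22 :: "'a set \<Rightarrow> 'a set set \<Rightarrow> bool" where
  "tight22 V E \<longleftrightarrow> sparse22 V E \<and> int (card E) = 2 * int (card V) - 2"

definition fixed_vertex :: "('a \<Rightarrow> 'a) \<Rightarrow> 'a \<Rightarrow> bool" where
  "fixed_vertex \<theta> v \<longleftrightarrow> \<theta> v = v"

definition fixed_edge :: "('a \<Rightarrow> 'a) \<Rightarrow> 'a set \<Rightarrow> bool" where
  "fixed_edge \<theta> e \<longleftrightarrow> \<theta> ` e = e"

definition Ci_tight22 :: "'a set \<Rightarrow> 'a set set \<Rightarrow> ('a \<Rightarrow> 'a) \<Rightarrow> bool" where
  "Ci_tight22 V E \<theta> \<longleftrightarrow> Z2_symmetric V E \<theta> \<and> tight22 V E \<and>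
     (\<forall>v\<in>V. \<not> fixed_vertex \<theta> v) \<and> (\<forall>e\<in>E. \<not> fixed_edge \<theta> e)"

definition Cs_tight22 :: "'a set \<Rightarrow> 'a set set \<Rightarrow> ('a \<Rightarrow> 'a) \<Rightarrow> bool" where
  "Cs_tight22 V E \<theta> \<longleftrightarrow> Z2_symmetric V E \<theta> \<and> tight22 V E \<and>
     (\<forall>e\<in>E. \<not> fixed_edge \<theta> e)"

definition iG :: "'a set set \<Rightarrow> 'a set \<Rightarrow> nat" where
  "iG E X = card {e\<in>E. e \<subseteq> X}"

definition critical :: "'a set set \<Rightarrow> int \<Rightarrow> 'a set \<Rightarrow> bool" where
  "critical E k X \<longleftrightarrow> int (iG E X) = 2 * int (card X) - k"

definition nbhd :: "'a set set \<Rightarrow> 'a \<Rightarrow> 'a set" where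
  "nbhd E v = {u. {u, v} \<in> E}"

definition degree :: "'a set set \<Rightarrow> 'a \<Rightarrow> nat" where
  "degree E v = card {e\<in>E. v \<in> e}"

end

theory Submission
  imports Defs
begin

lemma even_inv:
  assumes "finite S" "\<forall>e\<in>S. f e \<in> S \<and> f (f e) = e \<and> f e \<noteq> e"
  shows "even (card S)"
  using assms
proof (induction "card S" arbitrary: S rule: less_induct)
  case less
  show ?case
  proof (cases "S = {}")
    case True then show ?thesis by simp
  next
    case False
    then obtain e where e: "e \<in> S" by blast
    define S' where "S' = S - {e, f e}"
    have fe: "f e \<in> S" "f e \<noteq> e" using less.prems e by auto
    have c2: "card {e, f e} \<le> card S" using less.prems(1) e fe by (intro card_mono) auto
    have c: "card S = card S' + 2"
      using less.prems(1) e fe c2 unfolding S'_def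
      by (simp add: card_Diff_subset)
    have "even (card S')"
    proof (rule less.hyps)
      show "card S' < card S" using c by simp
      show "finite S'" using less.prems unfolding S'_def by simp
      show "\<forall>a\<in>S'. f a \<in> S' \<and> f (f a) = a \<and> f a \<noteq> a"
      proof
        fix a assume a: "a \<in> S'"
        have aS: "a \<in> S" "a \<noteq> e" "a \<noteq> f e" using a unfolding S'_def by auto
        have p: "f a \<in> S" "f (f a) = a" "f a \<noteq> a" using less.prems(2) aS(1) by auto
        have "f a \<noteq> e" using aS p by auto
        moreover have "f a \<noteq> f e" using aS p less.prems(2) e by metis
        ultimately show "f a \<in> S' \<and> f (f a) = a \<and> f a \<noteq> a" using p unfolding S'_def by auto
      qed
    qed
    then show ?thesis using c by simp
  qed
qed

theorem lemma5p2:
  fixes V :: "'a set" and E :: "'a set set" and \<theta> :: "'a \<Rightarrow> 'a"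
  assumes G: "Ci_tight22 V E \<theta> \<or> Cs_tight22 V E \<theta>"
    and v: "v \<in> V" and deg: "degree E v = 3" and N: "nbhd E v = {x, y, z}"
    and xy: "{x, y} \<notin> E"
    and no2: "\<not> (\<exists>X. X \<subseteq> V - {v, \<theta> v} \<and> x \<in> X \<and> y \<in> X \<and> critical E 2 X)"
  shows "\<not> (\<exists>W. W \<subseteq> V - {v, \<theta> v} \<and> x \<in> W \<and> \<theta> x \<in> W \<and> y \<in> W \<and> \<theta> y \<in> W
              \<and> int (iG E W) = 2 * int (card W) - 3)"
proof
  have Z: "Z2_symmetric V E \<theta>" and T: "tight22 V E" and NF: "\<forall>e\<in>E. \<not> fixed_edge \<theta> e"
    using G unfolding Ci_tight22_def Cs_tight22_def by auto
  have fV: "finite V" and Esub: "\<forall>e\<in>E. e \<subseteq> V \<and> card e = 2"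
    using Z unfolding Z2_symmetric_def simple_graph_def by auto
  have bij: "bij_betw \<theta> V V" and inv: "\<forall>v\<in>V. \<theta> (\<theta> v) = v"
    and aut: "\<forall>u\<in>V. \<forall>v\<in>V. {u, v} \<in> E \<longleftrightarrow> {\<theta> u, \<theta> v} \<in> E"
    using Z unfolding Z2_symmetric_def by auto
  have sp: "sparse22 V E" using T unfolding tight22_def by auto
  have "E \<subseteq> Pow V" using Esub by blast
  then have fE: "finite E" using fV finite_subset finite_Pow_iff by blast
  have injV: "inj_on \<theta> V" using bij_betw_imp_inj_on[OF bij] .
  have thV: "\<theta> ` V \<subseteq> V" using bij_betw_imp_surj_on[OF bij] by simp
  have emap: "\<theta> ` e \<in> E" if "e \<in> E" for e
  proof -
    from Esub that have "card e = 2" "e \<subseteq> V" by auto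
    then obtain a b where "e = {a, b}" "a \<noteq> b" by (meson card_2_iff)
    moreover have "a \<in> V" "b \<in> V" using \<open>e \<subseteq> V\<close> calculation by auto
    ultimately have "{\<theta> a, \<theta> b} \<in> E" using aut that by blast
    then show ?thesis using \<open>e = {a, b}\<close> by simp
  qed
  have einv: "\<theta> ` (\<theta> ` e) = e" if "e \<in> E" for e
  proof -
    have "e \<subseteq> V" using Esub that by auto
    then show ?thesis using inv by (force simp: image_image)
  qed
  have par: "even (iG E U)" if "\<theta> ` U \<subseteq> U" for U
  proof -
    have "even (card {e\<in>E. e \<subseteq> U})"
    proof (rule even_inv[where f="\<lambda>e. \<theta> ` e"])
      show "finite {e \<in> E. e \<subseteq> U}" using fE by simp
      show "\<forall>e\<in>{e \<in> E. e \<subseteq> U}. \<theta> ` e \<in> {e \<in> E. e \<subseteq> U} \<and> \<theta> ` (\<theta> ` e) = e \<and> \<theta> ` e \<noteq> e"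
        using emap einv NF that unfolding fixed_edge_def by blast
    qed
    then show ?thesis unfolding iG_def .
  qed
  have spI: "int (iG E X) \<le> 2 * int (card X) - 2" if "X \<subseteq> V" "X \<noteq> {}" for X
    using sp that unfolding sparse22_def iG_def by auto
  assume "\<exists>W. W \<subseteq> V - {v, \<theta> v} \<and> x \<in> W \<and> \<theta> x \<in> W \<and> y \<in> W \<and> \<theta> y \<in> W
              \<and> int (iG E W) = 2 * int (card W) - 3"
  then obtain W where W: "W \<subseteq> V - {v, \<theta> v}" "x \<in> W" "\<theta> x \<in> W" "y \<in> W" "\<theta> y \<in> W"
    and Wc: "int (iG E W) = 2 * int (card W) - 3" by blast
  define W' where "W' = \<theta> ` W"
  have WV: "W \<subseteq> V" using W by auto
  have W'sub: "W' \<subseteq> V - {v, \<theta> v}"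
  proof
    fix w assume "w \<in> W'"
    then obtain u where u: "u \<in> W" "w = \<theta> u" unfolding W'_def by auto
    have uV: "u \<in> V" "u \<noteq> v" "u \<noteq> \<theta> v" using u W by auto
    have "\<theta> v \<in> V" using thV v by auto
    have "w \<noteq> v" using uV inv v u by metis
    moreover have "w \<noteq> \<theta> v" using uV injV v u by (metis inj_onD)
    ultimately show "w \<in> V - {v, \<theta> v}" using uV u thV by auto
  qed
  have cardW': "card W' = card W" unfolding W'_def
    using card_image inj_on_subset[OF injV WV] by blast
  have iW': "iG E W' = iG E W"
  proof -
    have inj2: "inj_on (\<lambda>e. \<theta> ` e) {e\<in>E. e \<subseteq> W}"
      by (rule inj_onI) (metis (no_types, lifting) einv mem_Collect_eq)
    have "(\<lambda>e. \<theta> ` e) ` {e\<in>E. e \<subseteq> W} = {e\<in>E. e \<subseteq> W'}"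
    proof
      show "(\<lambda>e. \<theta> ` e) ` {e\<in>E. e \<subseteq> W} \<subseteq> {e\<in>E. e \<subseteq> W'}"
        using emap unfolding W'_def by blast
      show "{e\<in>E. e \<subseteq> W'} \<subseteq> (\<lambda>e. \<theta> ` e) ` {e\<in>E. e \<subseteq> W}"
      proof
        fix e assume e: "e \<in> {e\<in>E. e \<subseteq> W'}"
        have "\<theta> ` e \<subseteq> \<theta> ` W'" using e by auto
        also have "\<theta> ` W' = W" unfolding W'_def using WV inv by (force simp: image_image)
        finally have "\<theta> ` e \<in> {e\<in>E. e \<subseteq> W}" using emap e by auto
        moreover have "e = \<theta> ` (\<theta> ` e)" using einv e by auto
        ultimately show "e \<in> (\<lambda>e. \<theta> ` e) ` {e\<in>E. e \<subseteq> W}" by blast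
      qed
    qed
    then show ?thesis unfolding iG_def using card_image[OF inj2] by simp
  qed
  define U where "U = W \<union> W'"
  define I where "I = W \<inter> W'"
  have xe: "x = \<theta> (\<theta> x)" "y = \<theta> (\<theta> y)" using W inv by auto
  have "x \<in> W'" unfolding W'_def using image_eqI[where f=\<theta>, OF xe(1) W(3)] .
  moreover have "y \<in> W'" unfolding W'_def using image_eqI[where f=\<theta>, OF xe(2) W(5)] .
  ultimately have xI: "x \<in> I" "y \<in> I" using W unfolding I_def by blast+
  have Usub: "U \<subseteq> V - {v, \<theta> v}" "I \<subseteq> V - {v, \<theta> v}"
    using W(1) W'sub unfolding U_def I_def by blast+
  have "W' \<subseteq> V" using W'sub by auto
  then have fW: "finite W" "finite W'" using finite_subset[OF WV fV] finite_subset[OF _ fV] by auto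
  have cardUI: "card U + card I = card W + card W'"
    unfolding U_def I_def using card_Un_Int[OF fW] by simp
  have super: "iG E W + iG E W' \<le> iG E U + iG E I"
  proof -
    let ?A = "{e\<in>E. e \<subseteq> W}" and ?B = "{e\<in>E. e \<subseteq> W'}"
    have fA: "finite ?A" "finite ?B" using fE by auto
    have "card ?A + card ?B = card (?A \<union> ?B) + card (?A \<inter> ?B)"
      by (rule card_Un_Int[OF fA])
    moreover have "?A \<inter> ?B = {e\<in>E. e \<subseteq> I}" unfolding I_def by auto
    moreover have "card (?A \<union> ?B) \<le> card {e\<in>E. e \<subseteq> U}"
      by (rule card_mono) (use fE U_def in auto)
    ultimately show ?thesis unfolding iG_def by simp
  qed
  have Inot: "\<not> critical E 2 I" using no2 Usub xI by blast
  have IV: "I \<subseteq> V" "I \<noteq> {}" "U \<subseteq> V" "U \<noteq> {}" using Usub xI W(2) unfolding U_def by blast+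
  have "int (iG E I) \<le> 2 * int (card I) - 2" using spI[OF IV(1,2)] .
  moreover have "int (iG E I) \<noteq> 2 * int (card I) - 2" using Inot unfolding critical_def by simp
  ultimately have I2: "int (iG E I) \<le> 2 * int (card I) - 3" by linarith
  have U2: "int (iG E U) \<le> 2 * int (card U) - 2" using spI[OF IV(3,4)] .
  have Uinv: "\<theta> ` U \<subseteq> U"
  proof -
    have "\<theta> ` W' = W" unfolding W'_def using WV inv by (force simp: image_image)
    then show ?thesis unfolding U_def W'_def by auto
  qed
  have Ue: "even (iG E U)" using par[OF Uinv] .
  have "int (iG E U) \<ge> 2 * int (card U) - 3"
    using super cardUI I2 Wc iW' cardW' by linarith
  moreover from Ue obtain k where "iG E U = 2 * k" by (auto elim: evenE)
  ultimately have "int (iG E U) = 2 * int (card U) - 2" using U2 by presburger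
  then have "critical E 2 U" unfolding critical_def by simp
  moreover have "x \<in> U" "y \<in> U" using xI unfolding U_def I_def by auto
  ultimately show False using no2 Usub by blast
qed

end
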